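(* Let $k,s\ge 1$ be integers. Then for every positive integer $n$, $$\frac{\sigma_{ks}(n)}{n^{ks}}=\zeta\big((k+1)s\big)\sum_{r=1}^{\infty}\frac{c_r^{s}(n^s)}{r^{(k+1)s}}.$$
   Context: For $s\in\mathbb{N}$ and integers $a,b$, $(a,b)_s$ denotes the largest $d^s$ with $d\in\mathbb{N}$ such that $d^s\mid a$ and $d^s\mid b$. The Cohen–Ramanujan sum is defined for $r,s\in\mathbb{N}$ and $n\in\mathbb{Z}$ by $$c_r^{s}(n)=\sum_{\substack{h=1\\ (h,r^s)_s=1}}^{r^s} e^{2\pi i n h/r^s}.$$ For $m,n\in\mathbb{N}$, $\sigma_m(n)=\sum_{d\mid n} d^m$. $\zeta$ denotes the Riemann zeta function. *)

theory Defs
  imports "HOL-Analysis.Analysis"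
begin

definition gcd_s :: "nat \<Rightarrow> int \<Rightarrow> int \<Rightarrow> nat" where
  "gcd_s s a b = Max {d ^ s | d::nat. d \<ge> 1 \<and> int (d ^ s) dvd a \<and> int (d ^ s) dvd b}"

definition cohen_ramanujan :: "nat \<Rightarrow> nat \<Rightarrow> int \<Rightarrow> complex" where
  "cohen_ramanujan r s n =
     (\<Sum>h \<in> {h \<in> {1..r ^ s}. gcd_s s (int h) (int (r ^ s)) = 1}.
        exp (2 * pi * \<i> * of_int n * of_nat h / of_nat (r ^ s)))"

definition sigma :: "nat \<Rightarrow> nat \<Rightarrow> nat" where
  "sigma m n = (\<Sum>d \<in> {d. d dvd n}. d ^ m)"

definition zeta :: "real \<Rightarrow> real" where
  "zeta x = (\<Sum>n. 1 / (real (Suc n)) powr x)"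

end

theory Submission
  imports Defs "HOL-Computational_Algebra.Primes"
begin


lemma dirichlet_product:
  fixes a b :: "nat \<Rightarrow> complex"
  assumes a: "(\<lambda>x. norm (a x)) summable_on {0<..}" and b: "(\<lambda>x. norm (b x)) summable_on {0<..}"
  shows "((\<lambda>N. \<Sum>d | d dvd N. a d * b (N div d)) has_sum (infsum a {0<..} * infsum b {0<..})) {0<..}"
proof -
  let ?P = "{0<..} :: nat set"
  have as: "a summable_on ?P" using a abs_summable_summable by blast
  have bs: "b summable_on ?P" using b abs_summable_summable by blast
  have abs: "Infinite_Sum.abs_summable_on (\<lambda>(x,y). a x * b y) (?P \<times> ?P)"
  proof (rule iffD2[OF Infinite_Sum.abs_summable_on_Sigma_iff], intro conjI ballI)
    fix x assume "x \<in> ?P"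
    show "(\<lambda>y. norm (case (x, y) of (x, y) \<Rightarrow> a x * b y)) summable_on ?P"
      using summable_on_cmult_right[OF b, of "norm (a x)"] by (simp add: norm_mult)
  next
    have "(\<lambda>x. norm (a x) * infsum (\<lambda>y. norm (b y)) ?P) summable_on ?P"
      using summable_on_cmult_left[OF a] by blast
    moreover have "infsum (\<lambda>y. norm (case (x, y) of (x, y) \<Rightarrow> a x * b y)) ?P = norm (a x) * infsum (\<lambda>y. norm (b y)) ?P" for x
      by (simp add: norm_mult infsum_cmult_right')
    moreover have "infsum (\<lambda>y. norm (b y)) ?P \<ge> 0" by (rule infsum_nonneg) auto
    ultimately show "(\<lambda>x. norm (infsum (\<lambda>y. norm (case (x, y) of (x, y) \<Rightarrow> a x * b y)) ?P)) summable_on ?P"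
      by (simp add: abs_mult)
  qed
  have prod: "((\<lambda>(x,y). a x * b y) has_sum (infsum a ?P * infsum b ?P)) (?P \<times> ?P)"
  proof (rule has_sum_SigmaI[where g = "\<lambda>x. a x * infsum b ?P"])
    fix x assume "x \<in> ?P"
    show "((\<lambda>y. case (x, y) of (x, y) \<Rightarrow> a x * b y) has_sum a x * infsum b ?P) ?P"
      using has_sum_cmult_right[OF has_sum_infsum[OF bs], of "a x"] by simp
  next
    show "((\<lambda>x. a x * infsum b ?P) has_sum infsum a ?P * infsum b ?P) ?P"
      using has_sum_cmult_left[OF has_sum_infsum[OF as]] by simp
  next
    show "(\<lambda>(x,y). a x * b y) summable_on ?P \<times> ?P"
      using abs abs_summable_summable by blast
  qed
  have sig: "((\<lambda>(N,d). a d * b (N div d)) has_sum (infsum a ?P * infsum b ?P)) (Sigma ?P (\<lambda>N. {d. d dvd N}))"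
  proof -
    have "((\<lambda>(N,d). a d * b (N div d)) has_sum (infsum a ?P * infsum b ?P)) (Sigma ?P (\<lambda>N. {d. d dvd N}))
       = ((\<lambda>(x,y). a x * b y) has_sum (infsum a ?P * infsum b ?P)) (?P \<times> ?P)"
      by (rule has_sum_reindex_bij_witness[where i = "\<lambda>(x,y). (x*y, x)" and j = "\<lambda>(N,d). (d, N div d)"])
         (auto elim!: dvdE)
    then show ?thesis using prod by simp
  qed
  show ?thesis
    by (rule has_sum_Sigma'[OF sig]) (auto intro!: has_sum_finiteI)
qed



definition mob :: "nat \<Rightarrow> int" where
  "mob d = (if d > 0 \<and> \<Prod>(prime_factors d) = d then (-1) ^ card (prime_factors d) else 0)"

lemma alt_sum_Pow:
  assumes "finite A"
  shows "(\<Sum>T\<in>Pow A. (-1::int) ^ card T) = (if A = {} then 1 else 0)"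
  using assms
proof (induction A rule: finite_induct)
  case empty
  then show ?case by simp
next
  case (insert x F)
  have disj: "Pow F \<inter> insert x ` Pow F = {}" using insert by auto
  have inj: "inj_on (insert x) (Pow F)" by (intro inj_onI) (metis PowD insert.hyps(2) insert_ident subsetD)
  have "(\<Sum>T\<in>Pow (insert x F). (-1::int) ^ card T)
      = (\<Sum>T\<in>Pow F. (-1::int) ^ card T) + (\<Sum>T\<in>insert x ` Pow F. (-1::int) ^ card T)"
    unfolding Pow_insert using insert disj by (intro sum.union_disjoint) auto
  also have "(\<Sum>T\<in>insert x ` Pow F. (-1::int) ^ card T) = (\<Sum>T\<in>Pow F. (-1::int) ^ card (insert x T))"
    using inj by (simp add: sum.reindex)
  also have "\<dots> = (\<Sum>T\<in>Pow F. - ((-1::int) ^ card T))"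
  proof (rule sum.cong)
    fix T assume "T \<in> Pow F"
    then have "finite T" "x \<notin> T" using insert finite_subset by auto
    then show "(-1::int) ^ card (insert x T) = - ((-1) ^ card T)" by simp
  qed simp
  finally show ?case by (simp add: sum_negf)
qed

lemma prime_factors_prod_primes:
  assumes "finite T" "\<forall>p\<in>T. prime (p::nat)"
  shows "prime_factors (\<Prod>T) = T"
proof -
  have "0 \<notin> T" using assms by auto
  then have "prime_factors (\<Prod>T) = \<Union>((prime_factors \<circ> id) ` T)"
    using assms prime_factors_prod[of T id] by simp
  also have "\<dots> = T" using assms by (auto simp: prime_prime_factors)
  finally show ?thesis .
qed

lemma prod_prime_factors_dvd: "(n::nat) > 0 \<Longrightarrow> \<Prod>(prime_factors n) dvd n"
proof -
  assume n: "n > 0"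
  have "\<Prod>(prime_factors n) dvd (\<Prod>p\<in>prime_factors n. p ^ multiplicity p n)"
  proof (rule prod_dvd_prod)
    fix p assume "p \<in> prime_factors n"
    then have "multiplicity p n > 0" by (simp add: prime_factors_multiplicity)
    then show "p dvd p ^ multiplicity p n" by (simp add: dvd_power)
  qed
  also have "\<dots> = n" using n prod_prime_factors[of n] by simp
  finally show ?thesis .
qed

lemma mob_sum:
  assumes "g > 0"
  shows "(\<Sum>d | d dvd g. mob d) = (if g = 1 then 1 else 0)"
proof -
  let ?Q = "{d. d dvd g \<and> \<Prod>(prime_factors d) = d}"
  have fin: "finite {d. d dvd g}" using assms by simp
  have "(\<Sum>d | d dvd g. mob d) = (\<Sum>d\<in>?Q. (-1) ^ card (prime_factors d))"
  proof (rule sum.mono_neutral_cong_right[OF fin])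
    show "?Q \<subseteq> {d. d dvd g}" by auto
    show "\<forall>i\<in>{d. d dvd g} - ?Q. mob i = 0" by (auto simp: mob_def)
    show "\<And>x. x \<in> ?Q \<Longrightarrow> mob x = (- 1) ^ card (prime_factors x)"
      using assms by (auto simp: mob_def intro: Nat.gr0I)
  qed
  also have "\<dots> = (\<Sum>T\<in>Pow (prime_factors g). (-1) ^ card T)"
  proof (rule sum.reindex_bij_witness[where j = prime_factors and i = "\<lambda>T. \<Prod>T"])
    fix T assume T: "T \<in> Pow (prime_factors g)"
    then have fT: "finite T" "\<forall>p\<in>T. prime p" using finite_subset by auto
    have pf: "prime_factors (\<Prod>T) = T" by (rule prime_factors_prod_primes[OF fT])
    show "prime_factors (\<Prod>T) = T" by (fact pf)
    have "\<Prod>T dvd \<Prod>(prime_factors g)" using T by (intro prod_dvd_prod_subset) auto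
    also have "\<dots> dvd g" using assms by (rule prod_prime_factors_dvd)
    finally show "\<Prod>T \<in> ?Q" using pf by simp
  next
    fix d assume "d \<in> ?Q"
    then show "\<Prod>(prime_factors d) = d" "prime_factors d \<in> Pow (prime_factors g)"
      using assms dvd_prime_factors[of g d] by auto
  qed simp
  also have "\<dots> = (if g = 1 then 1 else 0)"
    using assms by (simp add: alt_sum_Pow prime_factorization_empty_iff)
  finally show ?thesis .
qed



lemma lcm_pow_nat: "lcm (a::nat) b ^ n = lcm (a^n) (b^n)"
proof (cases "a = 0 \<or> b = 0")
  case True
  then show ?thesis by (cases n) auto
next
  case False
  then have g: "gcd a b > 0" by simp
  have "gcd a b * lcm a b = a * b" using gcd_mult_lcm[of a b] by simp
  then have "gcd a b ^ n * lcm a b ^ n = a ^ n * b ^ n" by (metis power_mult_distrib)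
  also have "\<dots> = gcd (a^n) (b^n) * lcm (a^n) (b^n)" using gcd_mult_lcm[of "a^n" "b^n"] by simp
  also have "gcd (a^n) (b^n) = gcd a b ^ n" by simp
  finally have eq: "gcd a b ^ n * lcm a b ^ n = gcd a b ^ n * lcm (a^n) (b^n)" .
  have nz: "gcd a b ^ n \<noteq> 0" using g power_not_zero by (metis less_numeral_extra(3))
  show ?thesis using mult_left_cancel[OF nz] eq by blast
qed

lemma set_eq_aux:
  assumes s: "s \<ge> 1" and r: "(r::nat) > 0"
  shows "{d ^ s |d::nat. d \<ge> 1 \<and> int (d ^ s) dvd int h \<and> int (d ^ s) dvd int (r ^ s)} = (\<lambda>d. d ^ s) ` {d. d dvd r \<and> d ^ s dvd h}"
proof -
  have s0: "s > 0" using s by simp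
  have e: "int (d ^ s) dvd int (r ^ s) \<longleftrightarrow> d dvd r" for d
    using pow_divides_pow_iff[OF s0, of d r] by (simp only: int_dvd_int_iff)
  have p: "d dvd r \<Longrightarrow> d \<ge> 1" for d using r by (cases d) auto
  show ?thesis
  proof (intro set_eqI iffI)
    fix x assume "x \<in> {d ^ s |d::nat. d \<ge> 1 \<and> int (d ^ s) dvd int h \<and> int (d ^ s) dvd int (r ^ s)}"
    then obtain d where "x = d ^ s" "int (d ^ s) dvd int h" "int (d ^ s) dvd int (r ^ s)" by blast
    then show "x \<in> (\<lambda>d. d ^ s) ` {d. d dvd r \<and> d ^ s dvd h}"
      by (metis (mono_tags, lifting) e int_dvd_int_iff image_eqI mem_Collect_eq)
  next
    fix x assume "x \<in> (\<lambda>d. d ^ s) ` {d. d dvd r \<and> d ^ s dvd h}"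
    then obtain d where "x = d ^ s" "d dvd r" "d ^ s dvd h" by blast
    then show "x \<in> {d ^ s |d::nat. d \<ge> 1 \<and> int (d ^ s) dvd int h \<and> int (d ^ s) dvd int (r ^ s)}"
      by (metis (mono_tags, lifting) p e int_dvd_int_iff mem_Collect_eq)
  qed
qed

lemma gcd_s_indicator:
  assumes s: "s \<ge> 1" and r: "r > 0" and h: "h > 0"
  shows "(\<Sum>d | d dvd r \<and> d ^ s dvd h. mob d) = (if gcd_s s (int h) (int (r ^ s)) = 1 then 1 else 0)"
proof -
  define D where "D = {d. d dvd r \<and> d ^ s dvd h}"
  have finD: "finite D" unfolding D_def using finite_divisors_nat[OF r] by (rule finite_subset[rotated]) blast
  have oneD: "1 \<in> D" unfolding D_def by simp
  define g where "g = Max D"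
  have gD: "g \<in> D" unfolding g_def using finD oneD Max_in by blast
  have g_ge: "d \<le> g" if "d \<in> D" for d unfolding g_def using finD that by simp
  have gpos: "g > 0" using gD r unfolding D_def by (intro Nat.gr0I) simp
  have Deq: "D = {d. d dvd g}"
  proof (intro set_eqI iffI)
    fix d assume dD: "d \<in> D"
    define l where "l = lcm d g"
    have "l dvd r" using dD gD unfolding D_def l_def by simp
    moreover have "l ^ s dvd h"
    proof -
      have "d ^ s dvd h" "g ^ s dvd h" using dD gD unfolding D_def by auto
      then have "lcm (d ^ s) (g ^ s) dvd h" by (rule lcm_least)
      then show ?thesis unfolding l_def lcm_pow_nat .
    qed
    ultimately have "l \<in> D" unfolding D_def by simp
    then have "l \<le> g" by (rule g_ge)
    moreover have "g dvd l" unfolding l_def by simp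
    moreover have "d > 0" using dD r unfolding D_def by (intro Nat.gr0I) simp
    then have "l > 0" unfolding l_def using gpos by (simp add: lcm_pos_nat)
    ultimately have "l = g" using dvd_imp_le le_antisym by blast
    then show "d \<in> {d. d dvd g}" unfolding l_def by (metis dvd_lcm1 mem_Collect_eq)
  next
    fix d assume "d \<in> {d. d dvd g}"
    then have "d dvd g" by simp
    then show "d \<in> D" using gD unfolding D_def
      using dvd_trans dvd_power_same by blast
  qed
  have set_eq: "{d ^ s |d::nat. d \<ge> 1 \<and> int (d ^ s) dvd int h \<and> int (d ^ s) dvd int (r ^ s)} = (\<lambda>d. d ^ s) ` D"
    unfolding D_def by (rule set_eq_aux[OF s r])
  have "gcd_s s (int h) (int (r ^ s)) = g ^ s"
    unfolding gcd_s_def set_eq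
  proof (rule Max_eqI)
    show "finite ((\<lambda>d. d ^ s) ` D)" using finD by simp
    show "g ^ s \<in> (\<lambda>d. d ^ s) ` D" using gD by simp
    show "\<And>y. y \<in> (\<lambda>d. d ^ s) ` D \<Longrightarrow> y \<le> g ^ s" using g_ge by (auto intro: power_mono)
  qed
  then have "gcd_s s (int h) (int (r ^ s)) = 1 \<longleftrightarrow> g = 1" using s by simp
  moreover have "(\<Sum>d | d dvd r \<and> d ^ s dvd h. mob d) = (\<Sum>d | d dvd g. mob d)"
    using Deq unfolding D_def by simp
  ultimately show ?thesis using mob_sum[OF gpos] by simp
qed



definition Gs :: "nat \<Rightarrow> int \<Rightarrow> nat \<Rightarrow> complex" where
  "Gs s M m = (\<Sum>j\<in>{1..m^s}. exp (complex_of_real (2 * pi) * \<i> * of_int M * of_nat j / of_nat (m ^ s)))"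

lemma inner_sum:
  assumes d: "d dvd r" and r: "r > 0"
  shows "(\<Sum>h\<in>{h\<in>{1..r^s}. d ^ s dvd h}. exp (complex_of_real (2 * pi) * \<i> * of_int M * of_nat h / of_nat (r ^ s)))
         = Gs s M (r div d)"
proof -
  obtain q where rq: "r = d * q" using d by (auto elim: dvdE)
  have dpos: "d > 0" and qpos: "q > 0" using r rq by auto
  have qr: "r div d = q" using rq dpos by simp
  have rs: "r ^ s = d ^ s * q ^ s" using rq by (simp add: power_mult_distrib)
  have dsp: "d ^ s > 0" using dpos by simp
  show ?thesis unfolding Gs_def qr
  proof (rule sum.reindex_bij_witness[where j = "\<lambda>h. h div d ^ s" and i = "\<lambda>j. d ^ s * j"])
    fix h assume h: "h \<in> {h\<in>{1..r^s}. d ^ s dvd h}"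
    then show "d ^ s * (h div d ^ s) = h" by simp
    from h have hh: "d ^ s dvd h" "1 \<le> h" "h \<le> r ^ s" by auto
    from hh(1) obtain t where t0: "h = d ^ s * t" by (elim dvdE)
    have t: "h = d ^ s * t" "1 \<le> h" "h \<le> r ^ s" using t0 hh by auto
    then have tq: "t \<le> q ^ s" "1 \<le> t" using rs dsp by (auto simp: mult_le_cancel1)
    have htd: "h div d ^ s = t" using t dsp by simp
    show "h div d ^ s \<in> {1..q ^ s}" using tq htd by simp
    have "complex_of_real (2 * pi) * \<i> * of_int M * of_nat t / of_nat (q ^ s)
        = complex_of_real (2 * pi) * \<i> * of_int M * of_nat h / of_nat (r ^ s)"
      using dpos qpos unfolding t(1) rs by (simp add: field_simps)
    then show "exp (complex_of_real (2 * pi) * \<i> * of_int M * of_nat (h div d ^ s) / of_nat (q ^ s))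
        = exp (complex_of_real (2 * pi) * \<i> * of_int M * of_nat h / of_nat (r ^ s))"
      using htd by simp
  next
    fix j assume j: "j \<in> {1..q ^ s}"
    then show "d ^ s * j div d ^ s = j" using dsp by simp
    show "d ^ s * j \<in> {h\<in>{1..r^s}. d ^ s dvd h}" using j dsp rs by auto
  qed
qed

lemma cr_formula:
  assumes s: "s \<ge> 1" and r: "r > 0"
  shows "cohen_ramanujan r s M = (\<Sum>d | d dvd r. of_int (mob d) * Gs s M (r div d))"
proof -
  define E where "E h = exp (complex_of_real (2 * pi) * \<i> * of_int M * of_nat h / of_nat (r ^ s))" for h :: nat
  have finr: "finite {d. d dvd r}" using r by simp
  have "cohen_ramanujan r s M = (\<Sum>h\<in>{h\<in>{1..r^s}. gcd_s s (int h) (int (r ^ s)) = 1}. E h)"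
    unfolding cohen_ramanujan_def E_def by simp
  also have "\<dots> = (\<Sum>h\<in>{1..r^s}. if gcd_s s (int h) (int (r ^ s)) = 1 then E h else 0)"
    by (rule sum.inter_filter) simp
  also have "\<dots> = (\<Sum>h\<in>{1..r^s}. (if gcd_s s (int h) (int (r ^ s)) = 1 then 1 else 0) * E h)"
    by (rule sum.cong) auto
  also have "\<dots> = (\<Sum>h\<in>{1..r^s}. \<Sum>d\<in>{d. d dvd r}. (if d ^ s dvd h then of_int (mob d) * E h else 0))"
  proof (rule sum.cong[OF refl])
    fix h assume "h \<in> {1..r^s}"
    then have h: "h > 0" by simp
    have "(if gcd_s s (int h) (int (r ^ s)) = 1 then 1 else 0) = (of_int (\<Sum>d | d dvd r \<and> d ^ s dvd h. mob d) :: complex)"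
      using gcd_s_indicator[OF s r h] by simp
    also have "\<dots> = (\<Sum>d\<in>{d. d dvd r}. if d ^ s dvd h then of_int (mob d) else 0)"
      using finr by (simp add: sum.inter_filter[symmetric] conj_commute)
    finally have ind: "(if gcd_s s (int h) (int (r ^ s)) = 1 then 1 else 0) = (\<Sum>d\<in>{d. d dvd r}. if d ^ s dvd h then of_int (mob d) else (0::complex))" .
    have "(\<Sum>d\<in>{d. d dvd r}. if d ^ s dvd h then of_int (mob d) else (0::complex)) * E h
        = (\<Sum>d\<in>{d. d dvd r}. (if d ^ s dvd h then of_int (mob d) * E h else 0))"
      by (subst sum_distrib_right) (rule sum.cong; simp)
    then show "(if gcd_s s (int h) (int (r ^ s)) = 1 then 1 else 0) * E h
        = (\<Sum>d\<in>{d. d dvd r}. (if d ^ s dvd h then of_int (mob d) * E h else 0))"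
      unfolding ind .
  qed
  also have "\<dots> = (\<Sum>d\<in>{d. d dvd r}. \<Sum>h\<in>{1..r^s}. (if d ^ s dvd h then of_int (mob d) * E h else 0))"
    by (rule sum.swap)
  also have "\<dots> = (\<Sum>d\<in>{d. d dvd r}. of_int (mob d) * Gs s M (r div d))"
  proof (rule sum.cong[OF refl])
    fix d assume "d \<in> {d. d dvd r}"
    then have d: "d dvd r" by simp
    have "(\<Sum>h\<in>{1..r^s}. (if d ^ s dvd h then of_int (mob d) * E h else 0))
        = of_int (mob d) * (\<Sum>h\<in>{h\<in>{1..r^s}. d ^ s dvd h}. E h)"
      by (subst sum_distrib_left, subst sum.inter_filter) simp_all
    also have "\<dots> = of_int (mob d) * Gs s M (r div d)"
      using inner_sum[OF d r, where s=s and M=M] unfolding E_def by simp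
    finally show "(\<Sum>h\<in>{1..r^s}. (if d ^ s dvd h then of_int (mob d) * E h else 0)) = of_int (mob d) * Gs s M (r div d)" .
  qed
  finally show ?thesis by simp
qed

lemma Gs_eval:
  assumes s: "s \<ge> 1" and m: "m > 0"
  shows "Gs s (int (n ^ s)) m = (if m dvd n then of_nat (m ^ s) else 0)"
proof -
  define q where "q = m ^ s"
  have qpos: "q > 0" using m unfolding q_def by simp
  define z where "z = complex_of_real (2 * pi) * \<i> * of_nat (n ^ s) / of_nat q"
  define w where "w = exp z"
  have wterm: "exp (complex_of_real (2 * pi) * \<i> * of_int (int (n ^ s)) * of_nat j / of_nat q) = w ^ j" for j
  proof -
    have "complex_of_real (2 * pi) * \<i> * of_int (int (n ^ s)) * of_nat j / of_nat q = of_nat j * z"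
      unfolding z_def by simp
    then show ?thesis unfolding w_def by (simp add: exp_of_nat_mult)
  qed
  have G: "Gs s (int (n ^ s)) m = (\<Sum>j\<in>{1..q}. w ^ j)"
    unfolding Gs_def q_def[symmetric] using wterm by simp
  have wq: "w ^ q = 1"
  proof -
    have "w ^ q = exp (of_nat q * z)" unfolding w_def by (simp add: exp_of_nat_mult)
    also have "of_nat q * z = of_nat (n ^ s) * (2 * of_real pi * \<i>)"
      unfolding z_def using qpos by simp
    also have "exp \<dots> = 1" by (simp only: exp_of_nat_mult exp_two_pi_i power_one)
    finally show ?thesis .
  qed
  show ?thesis
  proof (cases "m dvd n")
    case True
    then obtain t where t: "n = m * t" by (elim dvdE)
    have "z = of_nat (t ^ s) * (2 * of_real pi * \<i>)"
      unfolding z_def q_def t using m by (simp add: power_mult_distrib)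
    then have w1: "w = 1" unfolding w_def by (simp only: exp_of_nat_mult exp_two_pi_i power_one)
    show ?thesis unfolding G using True w1 q_def by simp
  next
    case False
    have "w \<noteq> 1"
    proof
      assume "w = 1"
      then obtain k :: int where k: "Im z = of_int (2 * k) * pi" unfolding w_def exp_eq_1 by blast
      have "Im z = 2 * pi * real (n ^ s) / real q" unfolding z_def by simp
      with k have "real (n ^ s) = real_of_int k * real q" using qpos by (simp add: field_simps)
      then have "int (n ^ s) = k * int q" by (metis of_int_eq_iff of_int_mult of_int_of_nat_eq)
      then have "int q dvd int (n ^ s)" by simp
      then have "m ^ s dvd n ^ s" unfolding q_def by (simp only: int_dvd_int_iff)
      then have "m dvd n" using s by simp
      with False show False by simp
    qed
    have "(\<Sum>j\<in>{1..q}. w ^ j) = (\<Sum>i<q. w ^ Suc i)"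
      using sum.atLeast1_atMost_eq[of "\<lambda>j. w ^ j" q] by simp
    also have "\<dots> = w * (\<Sum>i<q. w ^ i)" by (simp add: sum_distrib_left)
    also have "\<dots> = 0" using \<open>w \<noteq> 1\<close> wq by (simp add: geometric_sum)
    finally show ?thesis unfolding G using False by simp
  qed
qed



lemma bK_summable:
  assumes K: "K \<ge> 2"
  shows "(\<lambda>m::nat. norm (1 / (of_nat m ^ K :: complex))) summable_on {0<..}"
proof -
  have "summable (\<lambda>m::nat. norm (inverse (real m ^ K)))"
    using inverse_power_summable[OF K, where 'a = real] by simp
  then have "(\<lambda>m::nat. inverse (real m ^ K)) summable_on UNIV"
    by (rule norm_summable_imp_summable_on)
  then have "(\<lambda>m::nat. inverse (real m ^ K)) summable_on {0<..}"
    by (rule summable_on_subset_banach) simp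
  then show ?thesis
    by (rule summable_on_cong[THEN iffD1, rotated]) (simp add: norm_divide norm_power divide_inverse norm_inverse)
qed

lemma zeta_has_sum:
  assumes K: "K \<ge> 2"
  shows "((\<lambda>m::nat. 1 / (of_nat m ^ K :: complex)) has_sum complex_of_real (zeta (real K))) {0<..}"
proof -
  define g where "g n = 1 / real (Suc n) ^ K" for n
  have "summable (\<lambda>m::nat. inverse (real m ^ K))"
    using inverse_power_summable[OF K, where 'a = real] by simp
  then have "summable (\<lambda>n. (\<lambda>m. inverse (real m ^ K)) (Suc n))" by (subst summable_Suc_iff)
  then have sg: "summable g"
    unfolding g_def by (simp add: divide_inverse)
  have z: "zeta (real K) = suminf g"
    unfolding zeta_def g_def by (simp add: powr_realpow)
  have "g sums zeta (real K)" using sg z by (simp add: summable_sums)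
  then have s1: "(\<lambda>n. complex_of_real (g n)) sums complex_of_real (zeta (real K))"
    by (rule sums_of_real)
  have gn: "g n \<ge> 0" for n unfolding g_def by simp
  have s2: "summable (\<lambda>n. norm (complex_of_real (g n)))"
    using sg gn by (simp only: norm_of_real abs_of_nonneg)
  have "((\<lambda>n. complex_of_real (g n)) has_sum complex_of_real (zeta (real K))) UNIV"
    by (rule norm_summable_imp_has_sum[OF s2 s1])
  moreover have "((\<lambda>n. complex_of_real (g n)) has_sum complex_of_real (zeta (real K))) UNIV
      = ((\<lambda>m::nat. 1 / (of_nat m ^ K :: complex)) has_sum complex_of_real (zeta (real K))) {0<..}"
    by (rule has_sum_reindex_bij_witness[where i = "\<lambda>m. m - 1" and j = Suc]) (auto simp: g_def)
  ultimately show ?thesis by simp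
qed

lemma mob_abs: "\<bar>mob d\<bar> \<le> 1"
  by (simp add: mob_def)

lemma sigma_div:
  assumes n: "n > 0"
  shows "(of_nat (sigma m n) / of_nat n ^ m :: complex) = (\<Sum>d | d dvd n. 1 / of_nat d ^ m)"
proof -
  have "(of_nat (sigma m n) / of_nat n ^ m :: complex) = (\<Sum>d | d dvd n. of_nat d ^ m / of_nat n ^ m)"
    unfolding sigma_def by (simp add: sum_divide_distrib)
  also have "\<dots> = (\<Sum>d | d dvd n. 1 / of_nat (n div d) ^ m)"
  proof (rule sum.cong[OF refl])
    fix d assume "d \<in> {d. d dvd n}"
    then obtain e where e: "n = d * e" by (auto elim: dvdE)
    then have "d > 0" "e > 0" using n by auto
    then show "(of_nat d ^ m / of_nat n ^ m :: complex) = 1 / of_nat (n div d) ^ m"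
      unfolding e by (simp add: power_mult_distrib)
  qed
  also have "\<dots> = (\<Sum>d | d dvd n. 1 / of_nat d ^ m)"
    by (rule sum.reindex_bij_witness[where i = "\<lambda>d. n div d" and j = "\<lambda>d. n div d"])
       (use n in \<open>auto simp: div_div_eq_right dvd_div_eq_mult elim!: dvdE\<close>)
  finally show ?thesis .
qed

theorem mainTheorem2:
  fixes k s n :: nat
  assumes "k \<ge> 1" and "s \<ge> 1" and "n \<ge> 1"
  shows "(\<lambda>r. complex_of_real (zeta (real ((k + 1) * s))) *
            cohen_ramanujan (Suc r) s (int (n ^ s)) / of_nat (Suc r) ^ ((k + 1) * s))
         sums (of_nat (sigma (k * s) n) / of_nat n ^ (k * s))"
proof -
  have s1: "s \<ge> 1" and npos: "n > 0" using assms by auto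
  define K where "K = (k + 1) * s"
  have K2: "K \<ge> 2" unfolding K_def using mult_le_mono[of 2 "k+1" 1 s] assms by simp
  have KK: "K = k * s + s" unfolding K_def by simp
  define M where "M = int (n ^ s)"
  define mu' where "mu' d = of_int (mob d) / (of_nat d ^ K :: complex)" for d
  define bK where "bK m = 1 / (of_nat m ^ K :: complex)" for m
  define f' where "f' m = (if m dvd n then of_nat (m ^ s) else 0) / (of_nat m ^ K :: complex)" for m
  define Z where "Z = complex_of_real (zeta (real K))"
  have bsum: "(\<lambda>m. norm (bK m)) summable_on {0<..}" using bK_summable[OF K2] unfolding bK_def .
  have musum: "(\<lambda>m. norm (mu' m)) summable_on {0<..}"
  proof (rule Infinite_Sum.abs_summable_on_comparison_test'[OF bsum])
    fix m :: nat assume "m \<in> {0<..}"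
    have "norm (mu' m) = \<bar>real_of_int (mob m)\<bar> / real m ^ K"
      unfolding mu'_def by (simp add: norm_divide norm_power)
    also have "\<dots> \<le> 1 / real m ^ K"
      using mob_abs[of m] by (intro divide_right_mono) simp_all
    also have "\<dots> = norm (bK m)" unfolding bK_def by (simp add: norm_divide norm_power)
    finally show "norm (mu' m) \<le> norm (bK m)" .
  qed
  have fsum: "(\<lambda>m. norm (f' m)) summable_on {0<..}"
  proof (rule finite_nonzero_values_imp_summable_on)
    show "finite {x \<in> {0<..}. norm (f' x) \<noteq> 0}"
      by (rule finite_subset[of _ "{m. m dvd n}"]) (use npos in \<open>auto simp: f'_def split: if_splits\<close>)
  qed
  define A where "A = infsum mu' {0<..}"
  define F where "F = infsum f' {0<..}"
  have Zeq: "infsum bK {0<..} = Z"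
    using zeta_has_sum[OF K2] unfolding bK_def Z_def by (rule infsumI)
  have AZ: "A * Z = 1"
  proof -
    have D1: "((\<lambda>N. \<Sum>d | d dvd N. mu' d * bK (N div d)) has_sum (A * Z)) {0<..}"
      using dirichlet_product[OF musum bsum] unfolding A_def Zeq .
    have conv: "(\<Sum>d | d dvd N. mu' d * bK (N div d)) = (if N = 1 then 1 else 0)" if N: "N \<in> {0<..}" for N
    proof -
      have "(\<Sum>d | d dvd N. mu' d * bK (N div d)) = (\<Sum>d | d dvd N. of_int (mob d) / of_nat N ^ K)"
      proof (rule sum.cong[OF refl])
        fix d assume "d \<in> {d. d dvd N}"
        then obtain e where e: "N = d * e" by (auto elim: dvdE)
        then have "d > 0" "e > 0" using N by auto
        then show "mu' d * bK (N div d) = of_int (mob d) / of_nat N ^ K"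
          unfolding mu'_def bK_def e by (simp add: power_mult_distrib)
      qed
      also have "\<dots> = of_int (\<Sum>d | d dvd N. mob d) / of_nat N ^ K"
        by (simp add: sum_divide_distrib)
      also have "\<dots> = (if N = 1 then 1 else 0)"
        using mob_sum[of N] N by simp
      finally show ?thesis .
    qed
    have "((\<lambda>N::nat. if N = 1 then 1 else 0 :: complex) has_sum (A * Z)) {0<..}"
      using D1 by (rule has_sum_cong[THEN iffD1, rotated]) (use conv in auto)
    moreover have "((\<lambda>N::nat. if N = 1 then 1 else 0 :: complex) has_sum 1) {0<..}"
      by (rule has_sum_finite_neutralI[of "{1}"]) auto
    ultimately show ?thesis by (rule has_sum_unique)
  qed
  have D2: "((\<lambda>N. \<Sum>d | d dvd N. mu' d * f' (N div d)) has_sum (A * F)) {0<..}"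
    using dirichlet_product[OF musum fsum] unfolding A_def F_def .
  have conv2: "(\<Sum>d | d dvd N. mu' d * f' (N div d)) = cohen_ramanujan N s M / of_nat N ^ K"
    if N: "N \<in> {0<..}" for N
  proof -
    have Npos: "N > 0" using N by simp
    have "cohen_ramanujan N s M / of_nat N ^ K
        = (\<Sum>d | d dvd N. of_int (mob d) * Gs s M (N div d) / of_nat N ^ K)"
      unfolding cr_formula[OF s1 Npos] by (simp add: sum_divide_distrib)
    also have "\<dots> = (\<Sum>d | d dvd N. mu' d * f' (N div d))"
    proof (rule sum.cong[OF refl])
      fix d assume "d \<in> {d. d dvd N}"
      then obtain e where e: "N = d * e" by (auto elim: dvdE)
      then have dp: "d > 0" and ep: "e > 0" using Npos by auto
      have "Gs s M e = (if e dvd n then of_nat (e ^ s) else 0)"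
        unfolding M_def by (rule Gs_eval[OF s1 ep])
      then show "of_int (mob d) * Gs s M (N div d) / of_nat N ^ K = mu' d * f' (N div d)"
        unfolding mu'_def f'_def e using dp ep by (simp add: power_mult_distrib)
    qed
    finally show ?thesis by simp
  qed
  have D3: "((\<lambda>N. cohen_ramanujan N s M / of_nat N ^ K) has_sum (A * F)) {0<..}"
    using D2 by (rule has_sum_cong[THEN iffD1, rotated]) (use conv2 in auto)
  have D4: "((\<lambda>r. cohen_ramanujan (Suc r) s M / of_nat (Suc r) ^ K) has_sum (A * F)) UNIV"
  proof -
    have "((\<lambda>r. cohen_ramanujan (Suc r) s M / of_nat (Suc r) ^ K) has_sum (A * F)) UNIV
        = ((\<lambda>N. cohen_ramanujan N s M / of_nat N ^ K) has_sum (A * F)) {0<..}"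
      by (rule has_sum_reindex_bij_witness[where i = "\<lambda>m. m - 1" and j = Suc]) auto
    then show ?thesis using D3 by simp
  qed
  have S: "(\<lambda>r. Z * (cohen_ramanujan (Suc r) s M / of_nat (Suc r) ^ K)) sums (Z * (A * F))"
    by (rule sums_mult[OF has_sum_imp_sums[OF D4]])
  have Fval: "F = of_nat (sigma (k * s) n) / of_nat n ^ (k * s)"
  proof -
    have "F = (\<Sum>m | m dvd n. f' m)"
      unfolding F_def
      by (subst infsum_cong_neutral[where T = "{m. m dvd n}" and g = f'])
         (use npos in \<open>auto simp: f'_def intro: Nat.gr0I\<close>)
    also have "\<dots> = (\<Sum>m | m dvd n. 1 / of_nat m ^ (k * s))"
    proof (rule sum.cong[OF refl])
      fix m assume "m \<in> {m. m dvd n}"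
      then have "m dvd n" "m > 0" using npos by (auto intro: Nat.gr0I)
      then show "f' m = 1 / of_nat m ^ (k * s)"
        unfolding f'_def KK by (simp add: power_add)
    qed
    also have "\<dots> = of_nat (sigma (k * s) n) / of_nat n ^ (k * s)"
      by (rule sigma_div[OF npos, symmetric])
    finally show ?thesis .
  qed
  have "Z * (A * F) = F" using AZ by (simp add: mult.assoc[symmetric] mult.commute[of Z])
  with S have "(\<lambda>r. Z * (cohen_ramanujan (Suc r) s M / of_nat (Suc r) ^ K)) sums F" by simp
  then have "(\<lambda>r. Z * cohen_ramanujan (Suc r) s M / of_nat (Suc r) ^ K) sums F"
    by (simp only: times_divide_eq_right)
  then show ?thesis unfolding Fval Z_def K_def M_def .
qed

end
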